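(* For $A\in\{D,C\}$ and all $\sigma,\tau\in\Lambda^r_A$: $\sigma\le^r_A\tau$ if and only if $\sigma\le_A\tau$. That is, $\le^r_D$ and $\le^r_C$ are the restrictions to the restricted types of $\le_D$ and $\le_C$.
   Context: Let $R=\{\bot\sqsubset\top\}$ be the two-point lattice, and write $\psi$ for the type constant $\psi_\top$. Full types: - $\Lambda_R$: $\rho::=\psi_a\mid\omega\mid\rho\wedge\rho$ ($a\in R$); - $\Lambda_D$: $\delta::=\rho\mid\kappa\to\rho\mid\omega\mid\delta\wedge\delta$; - $\Lambda_C$: $\kappa::=\delta\times\kappa\mid\omega\mid\kappa\wedge\kappa$. The relations $\le_R,\le_D,\le_C$ are the least reflexive, transitive relations with $\sigma\wedge\tau\le\sigma,\tau$, $\sigma\le\omega$, $\rho\le\sigma,\tau\Rightarrow\rho\le\sigma\wedge\tau$, and additionally: - $\psi_\bot\sim\omega$ and $\psi_{a\sqcup b}\sim\psi_a\wedge\psi_b$; - $\le_R\subseteq\le_D$; - $\omega\le_D\omega\to\omega$; - $\psi_a\le_D\omega\to\psi_a\le_D\psi_a$; - $\omega\le_C\omega\times\omega$; - $(\kappa\to\rho_1)\wedge(\kappa\to\rho_2)\le_D\kappa\to(\rho_1\wedge\rho_2)$; - $(\delta_1\times\kappa_1)\wedge(\delta_2\times\kappa_2)\le_C(\delta_1\wedge\delta_2)\times(\kappa_1\wedge\kappa_2)$; - if $\kappa_2\le_C\kappa_1$ and $\rho_1\le_R\rho_2$ then $\kappa_1\to\rho_1\le_D\kappa_2\to\rho_2$;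 - $\times$ is covariant in both arguments. Restricted types: $\Lambda^r_D$: $\delta::=\kappa\to\psi\mid\delta\wedge\delta$; $\Lambda^r_C$: $\kappa::=\omega\mid\delta\times\kappa\mid\kappa\wedge\kappa$. Thus $\Lambda^r_A\subseteq\Lambda_A$. $\le^r_D$ and $\le^r_C$ are the least relations on $\Lambda^r_D$ and $\Lambda^r_C$ that are reflexive and transitive, satisfy $\sigma\wedge\tau\le\sigma$, $\sigma\wedge\tau\le\tau$, and $\sigma\le\tau_1,\tau_2\Rightarrow\sigma\le\tau_1\wedge\tau_2$, and in addition: - $\kappa\le^r_C\omega$; - $(\delta_1\times\kappa_1)\wedge(\delta_2\times\kappa_2)\le^r_C(\delta_1\wedge\delta_2)\times(\kappa_1\wedge\kappa_2)$; - if $\delta_1\le^r_D\delta_2$ and $\kappa_1\le^r_C\kappa_2$ then $\delta_1\times\kappa_1\le^r_C\delta_2\times\kappa_2$; - if $\kappa_2\le^r_C\kappa_1$ then $\kappa_1\to\psi\le^r_D\kappa_2\to\psi$. *)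

theory Defs
  imports Main
begin

(* Raw type syntax shared by all sorts; the lattice R = {bot < top} is bool
   (False = bot, True = top, join = disjunction).  Psi a is the constant psi_a,
   Om is omega, And is the intersection, Arr k r is k -> r, Prod d k is d x k. *)
datatype ty = Psi bool | Om | And ty ty | Arr ty ty | Prod ty ty

abbreviation psi :: ty where "psi \<equiv> Psi True"

fun isR :: "ty \<Rightarrow> bool" where
  "isR (Psi a) = True"
| "isR Om = True"
| "isR (And s t) = (isR s \<and> isR t)"
| "isR _ = False"

fun isD :: "ty \<Rightarrow> bool" and isC :: "ty \<Rightarrow> bool" where
  "isD (Psi a) = True"
| "isD Om = True"
| "isD (And s t) = (isD s \<and> isD t)"
| "isD (Arr k r) = (isC k \<and> isR r)"
| "isD (Prod d k) = False"
| "isC Om = True"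
| "isC (And s t) = (isC s \<and> isC t)"
| "isC (Prod d k) = (isD d \<and> isC k)"
| "isC (Psi a) = False"
| "isC (Arr k r) = False"

inductive leR :: "ty \<Rightarrow> ty \<Rightarrow> bool" where
  R_refl: "isR s \<Longrightarrow> leR s s"
| R_trans: "leR s t \<Longrightarrow> leR t u \<Longrightarrow> leR s u"
| R_andL: "isR s \<Longrightarrow> isR t \<Longrightarrow> leR (And s t) s"
| R_andR: "isR s \<Longrightarrow> isR t \<Longrightarrow> leR (And s t) t"
| R_top: "isR s \<Longrightarrow> leR s Om"
| R_glb: "leR r s \<Longrightarrow> leR r t \<Longrightarrow> leR r (And s t)"
| R_bot1: "leR (Psi False) Om"
| R_bot2: "leR Om (Psi False)"
| R_join1: "leR (Psi (a \<or> b)) (And (Psi a) (Psi b))"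
| R_join2: "leR (And (Psi a) (Psi b)) (Psi (a \<or> b))"

inductive leD :: "ty \<Rightarrow> ty \<Rightarrow> bool" and leC :: "ty \<Rightarrow> ty \<Rightarrow> bool" where
  D_refl: "isD s \<Longrightarrow> leD s s"
| D_trans: "leD s t \<Longrightarrow> leD t u \<Longrightarrow> leD s u"
| D_andL: "isD s \<Longrightarrow> isD t \<Longrightarrow> leD (And s t) s"
| D_andR: "isD s \<Longrightarrow> isD t \<Longrightarrow> leD (And s t) t"
| D_top: "isD s \<Longrightarrow> leD s Om"
| D_glb: "leD r s \<Longrightarrow> leD r t \<Longrightarrow> leD r (And s t)"
| D_R: "leR s t \<Longrightarrow> leD s t"
| D_om_arr: "leD Om (Arr Om Om)"
| D_psi1: "leD (Psi a) (Arr Om (Psi a))"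
| D_psi2: "leD (Arr Om (Psi a)) (Psi a)"
| D_arr_and: "isC k \<Longrightarrow> isR r1 \<Longrightarrow> isR r2 \<Longrightarrow>
     leD (And (Arr k r1) (Arr k r2)) (Arr k (And r1 r2))"
| D_arr: "leC k2 k1 \<Longrightarrow> leR r1 r2 \<Longrightarrow> leD (Arr k1 r1) (Arr k2 r2)"
| C_refl: "isC s \<Longrightarrow> leC s s"
| C_trans: "leC s t \<Longrightarrow> leC t u \<Longrightarrow> leC s u"
| C_andL: "isC s \<Longrightarrow> isC t \<Longrightarrow> leC (And s t) s"
| C_andR: "isC s \<Longrightarrow> isC t \<Longrightarrow> leC (And s t) t"
| C_top: "isC s \<Longrightarrow> leC s Om"
| C_glb: "leC r s \<Longrightarrow> leC r t \<Longrightarrow> leC r (And s t)"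
| C_om_prod: "leC Om (Prod Om Om)"
| C_prod_and: "isD d1 \<Longrightarrow> isD d2 \<Longrightarrow> isC k1 \<Longrightarrow> isC k2 \<Longrightarrow>
     leC (And (Prod d1 k1) (Prod d2 k2)) (Prod (And d1 d2) (And k1 k2))"
| C_prod: "leD d1 d2 \<Longrightarrow> leC k1 k2 \<Longrightarrow> leC (Prod d1 k1) (Prod d2 k2)"

fun isRD :: "ty \<Rightarrow> bool" and isRC :: "ty \<Rightarrow> bool" where
  "isRD (Arr k r) = (isRC k \<and> r = psi)"
| "isRD (And s t) = (isRD s \<and> isRD t)"
| "isRD (Psi a) = False"
| "isRD Om = False"
| "isRD (Prod d k) = False"
| "isRC Om = True"
| "isRC (Prod d k) = (isRD d \<and> isRC k)"
| "isRC (And s t) = (isRC s \<and> isRC t)"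
| "isRC (Psi a) = False"
| "isRC (Arr k r) = False"

inductive leRD :: "ty \<Rightarrow> ty \<Rightarrow> bool" and leRC :: "ty \<Rightarrow> ty \<Rightarrow> bool" where
  RD_refl: "isRD s \<Longrightarrow> leRD s s"
| RD_trans: "leRD s t \<Longrightarrow> leRD t u \<Longrightarrow> leRD s u"
| RD_andL: "isRD s \<Longrightarrow> isRD t \<Longrightarrow> leRD (And s t) s"
| RD_andR: "isRD s \<Longrightarrow> isRD t \<Longrightarrow> leRD (And s t) t"
| RD_glb: "leRD r s \<Longrightarrow> leRD r t \<Longrightarrow> leRD r (And s t)"
| RD_arr: "leRC k2 k1 \<Longrightarrow> leRD (Arr k1 psi) (Arr k2 psi)"
| RC_refl: "isRC s \<Longrightarrow> leRC s s"
| RC_trans: "leRC s t \<Longrightarrow> leRC t u \<Longrightarrow> leRC s u"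
| RC_andL: "isRC s \<Longrightarrow> isRC t \<Longrightarrow> leRC (And s t) s"
| RC_andR: "isRC s \<Longrightarrow> isRC t \<Longrightarrow> leRC (And s t) t"
| RC_glb: "leRC r s \<Longrightarrow> leRC r t \<Longrightarrow> leRC r (And s t)"
| RC_top: "isRC s \<Longrightarrow> leRC s Om"
| RC_prod_and: "isRD d1 \<Longrightarrow> isRD d2 \<Longrightarrow> isRC k1 \<Longrightarrow> isRC k2 \<Longrightarrow>
     leRC (And (Prod d1 k1) (Prod d2 k2)) (Prod (And d1 d2) (And k1 k2))"
| RC_prod: "leRD d1 d2 \<Longrightarrow> leRC k1 k2 \<Longrightarrow> leRC (Prod d1 k1) (Prod d2 k2)"

end

theory Submission imports Defs begin

fun sz :: "ty \<Rightarrow> nat" where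
  "sz (Psi a) = 2" | "sz Om = 1" | "sz (And a b) = Suc (sz a + sz b)"
| "sz (Arr a b) = Suc (sz a + sz b)" | "sz (Prod a b) = Suc (sz a + sz b)"

definition szl :: "ty list \<Rightarrow> nat" where "szl xs = sum_list (map sz xs)"

fun trivR :: "ty \<Rightarrow> bool" where
  "trivR (Psi a) = (\<not> a)" | "trivR Om = True" | "trivR (And a b) = (trivR a \<and> trivR b)"
| "trivR _ = True"

fun atD :: "ty \<Rightarrow> ty list" where
  "atD (Psi a) = (if a then [Om] else [])" | "atD Om = []" | "atD (And a b) = atD a @ atD b"
| "atD (Arr k r) = (if trivR r then [] else [k])" | "atD (Prod d k) = []"

fun atC :: "ty \<Rightarrow> (ty \<times> ty) list" where
  "atC (And a b) = atC a @ atC b" | "atC (Prod d k) = [(d,k)]" | "atC _ = []"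

lemma atD_sz: "x \<in> set (atD t) \<Longrightarrow> sz x < sz t"
  by (induction t) (auto split: if_splits)

lemma atC_sz: "p \<in> set (atC t) \<Longrightarrow> sz (fst p) + sz (snd p) < sz t"
  by (induction t) auto

lemma atDs_sz: "x \<in> set (concat (map atD ds)) \<Longrightarrow> sz x < szl ds"
proof (induction ds)
  case Nil then show ?case by simp
next
  case (Cons a ds) then show ?case using atD_sz[of x a] by (force simp: szl_def)
qed

lemma atCs_sz: "szl (map fst (concat (map atC ks))) + szl (map snd (concat (map atC ks))) \<le> szl ks"
proof (induction ks)
  case Nil then show ?case by (simp add: szl_def)
next
  case (Cons a ks)
  have "szl (map fst (atC a)) + szl (map snd (atC a)) \<le> sz a"
  proof (induction a)
  qed (auto simp: szl_def)
  then show ?case using Cons by (auto simp: szl_def)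
qed

function subD :: "ty list \<Rightarrow> ty \<Rightarrow> bool" and subC :: "ty list \<Rightarrow> ty \<Rightarrow> bool" where
  "subD ds t = (\<forall>k'\<in>set (atD t). \<exists>k\<in>set (concat (map atD ds)). subC [k'] k)"
| "subC ks t = (\<forall>p\<in>set (atC t). subD (map fst (concat (map atC ks))) (fst p)
                    \<and> subC (map snd (concat (map atC ks))) (snd p))"
  by pat_completeness auto
termination
proof (relation "measure (\<lambda>x. case x of Inl (ds,t) \<Rightarrow> szl ds + sz t | Inr (ks,t) \<Rightarrow> szl ks + sz t)", goal_cases)
  case 1 then show ?case by simp
next
  case (2 ds t k' k)
  then show ?case using atD_sz[of k' t] atDs_sz[of k ds] by (simp add: szl_def)
next
  case (3 ks t p)
  then show ?case using atC_sz[of p t] atCs_sz[of ks] by simp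
next
  case (4 ks t p)
  then show ?case using atC_sz[of p t] atCs_sz[of ks] by simp
qed

declare subD.simps[simp del] subC.simps[simp del]


lemma sub_mono:
  shows "(subD ds t \<longrightarrow> (\<forall>ds'. set (concat (map atD ds)) \<subseteq> set (concat (map atD ds')) \<longrightarrow> subD ds' t))" and
   "(subC ks t2 \<longrightarrow> (\<forall>ks'. set (concat (map atC ks)) \<subseteq> set (concat (map atC ks')) \<longrightarrow> subC ks' t2))"
proof (induction ds t and ks t2 rule: subD_subC.induct)
  case (1 ds t)
  then show ?case by (subst (1 2) subD.simps) blast
next
  case (2 ks t)
  show ?case
  proof (intro impI allI)
    fix ks' assume h: "subC ks t" and inc: "set (concat (map atC ks)) \<subseteq> set (concat (map atC ks'))"
    show "subC ks' t" unfolding subC.simps[of ks' t]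
    proof
      fix p assume p: "p \<in> set (atC t)"
      from h p have a: "subD (map fst (concat (map atC ks))) (fst p)"
        and b: "subC (map snd (concat (map atC ks))) (snd p)" by (auto simp: subC.simps[of ks t])
      have i1: "set (concat (map atD (map fst (concat (map atC ks))))) \<subseteq> set (concat (map atD (map fst (concat (map atC ks')))))"
        using inc by auto
      have i2: "set (concat (map atC (map snd (concat (map atC ks))))) \<subseteq> set (concat (map atC (map snd (concat (map atC ks')))))"
        using inc by auto
      show "subD (map fst (concat (map atC ks'))) (fst p) \<and> subC (map snd (concat (map atC ks'))) (snd p)"
        using 2 p a b i1 i2 by blast
    qed
  qed
qed

lemma sub_refl_aux: "sz t = n \<Longrightarrow> subD [t] t \<and> subC [t] t"
proof (induction n arbitrary: t rule: less_induct)
  case (less n)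
  have D: "subD [t] t" unfolding subD.simps[of "[t]" t]
  proof
    fix k' assume k': "k' \<in> set (atD t)"
    then have "subC [k'] k'" using less.IH atD_sz less.prems by blast
    then show "\<exists>k\<in>set (concat (map atD [t])). subC [k'] k" using k' by auto
  qed
  have C: "subC [t] t" unfolding subC.simps[of "[t]" t]
  proof
    fix p assume p: "p \<in> set (atC t)"
    have lt: "sz (fst p) < n" "sz (snd p) < n" using atC_sz[OF p] less.prems by auto
    have "subD [fst p] (fst p)" "subC [snd p] (snd p)" using less.IH lt by auto
    moreover have "set (concat (map atD [fst p])) \<subseteq> set (concat (map atD (map fst (concat (map atC [t])))))"
      using p by force
    moreover have "set (concat (map atC [snd p])) \<subseteq> set (concat (map atC (map snd (concat (map atC [t])))))"
      using p by force
    ultimately show "subD (map fst (concat (map atC [t]))) (fst p) \<and> subC (map snd (concat (map atC [t]))) (snd p)"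
      using sub_mono by blast
  qed
  show ?case using C D by blast
qed

lemma subD_refl: "subD [t] t" using sub_refl_aux by blast
lemma subC_refl: "subC [t] t" using sub_refl_aux by blast

lemma szl_map_fst: "szl (map fst (concat (map atC ks))) \<le> szl ks"
  using atCs_sz[of ks] by simp
lemma szl_map_snd: "szl (map snd (concat (map atC ks))) \<le> szl ks"
  using atCs_sz[of ks] by simp

lemma sub_trans_aux:
  "\<forall>X Y z. szl X + szl Y + sz z = n \<longrightarrow>
     ((\<forall>y\<in>set Y. subD X y) \<longrightarrow> subD Y z \<longrightarrow> subD X z) \<and>
     ((\<forall>y\<in>set Y. subC X y) \<longrightarrow> subC Y z \<longrightarrow> subC X z)"
proof (induction n rule: less_induct)
  case (less n)
  show ?case
  proof (intro allI impI conjI)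
    fix X Y z assume n: "szl X + szl Y + sz z = n"
    {
      assume hY: "\<forall>y\<in>set Y. subD X y" and hz: "subD Y z"
      show "subD X z" unfolding subD.simps[of X z]
      proof
        fix k'' assume k'': "k'' \<in> set (atD z)"
        then obtain k' where k': "k' \<in> set (concat (map atD Y))" and c1: "subC [k''] k'"
          using hz k'' unfolding subD.simps[of Y z] by blast
        then obtain y where y: "y \<in> set Y" "k' \<in> set (atD y)" by auto
        then have "subD X y" using hY by auto
        then obtain k where k: "k \<in> set (concat (map atD X))" and c2: "subC [k'] k"
          using y unfolding subD.simps[of X y] by blast
        have m: "szl [k''] + szl [k'] + sz k < n"
          using atD_sz[OF k''] atDs_sz[OF k'] atDs_sz[OF k] n by (simp add: szl_def)
        have "subC [k''] k" using less.IH[OF m] c1 c2 by auto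
        then show "\<exists>k\<in>set (concat (map atD X)). subC [k''] k" using k by blast
      qed
    }
    {
      assume hY: "\<forall>y\<in>set Y. subC X y" and hz: "subC Y z"
      show "subC X z" unfolding subC.simps[of X z]
      proof
        fix p assume p: "p \<in> set (atC z)"
        from hz p have a: "subD (map fst (concat (map atC Y))) (fst p)"
          and b: "subC (map snd (concat (map atC Y))) (snd p)" by (auto simp: subC.simps[of Y z])
        have hY1: "\<forall>y\<in>set (map fst (concat (map atC Y))). subD (map fst (concat (map atC X))) y"
        proof
          fix y assume "y \<in> set (map fst (concat (map atC Y)))"
          then obtain q y0 where q: "y0 \<in> set Y" "q \<in> set (atC y0)" "y = fst q" by auto
          then have "subC X y0" using hY by auto
          then show "subD (map fst (concat (map atC X))) y" using q by (auto simp: subC.simps[of X y0])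
        qed
        have hY2: "\<forall>y\<in>set (map snd (concat (map atC Y))). subC (map snd (concat (map atC X))) y"
        proof
          fix y assume "y \<in> set (map snd (concat (map atC Y)))"
          then obtain q y0 where q: "y0 \<in> set Y" "q \<in> set (atC y0)" "y = snd q" by auto
          then have "subC X y0" using hY by auto
          then show "subC (map snd (concat (map atC X))) y" using q by (auto simp: subC.simps[of X y0])
        qed
        have m1: "szl (map fst (concat (map atC X))) + szl (map fst (concat (map atC Y))) + sz (fst p) < n"
          using atC_sz[OF p] szl_map_fst[of X] szl_map_fst[of Y] n by simp
        have m2: "szl (map snd (concat (map atC X))) + szl (map snd (concat (map atC Y))) + sz (snd p) < n"
          using atC_sz[OF p] szl_map_snd[of X] szl_map_snd[of Y] n by simp
        show "subD (map fst (concat (map atC X))) (fst p) \<and> subC (map snd (concat (map atC X))) (snd p)"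
          using less.IH[OF m1] less.IH[OF m2] a b hY1 hY2 by blast
      qed
    }
  qed
qed

lemma subD_trans: "subD [s] t \<Longrightarrow> subD [t] u \<Longrightarrow> subD [s] u"
proof -
  have "(\<forall>y\<in>set [t]. subD [s] y) \<longrightarrow> subD [t] u \<longrightarrow> subD [s] u"
    using sub_trans_aux[of "szl [s] + szl [t] + sz u"] by blast
  then show "subD [s] t \<Longrightarrow> subD [t] u \<Longrightarrow> subD [s] u" by simp
qed
lemma subC_trans: "subC [s] t \<Longrightarrow> subC [t] u \<Longrightarrow> subC [s] u"
proof -
  have "(\<forall>y\<in>set [t]. subC [s] y) \<longrightarrow> subC [t] u \<longrightarrow> subC [s] u"
    using sub_trans_aux[of "szl [s] + szl [t] + sz u"] by blast
  then show "subC [s] t \<Longrightarrow> subC [t] u \<Longrightarrow> subC [s] u" by simp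
qed


lemma subD_And: "subD ds (And a b) = (subD ds a \<and> subD ds b)"
  by (auto simp: subD.simps[of ds "And a b"] subD.simps[of ds a] subD.simps[of ds b])
lemma subC_And: "subC ks (And a b) = (subC ks a \<and> subC ks b)"
  by (auto simp: subC.simps[of ks "And a b"] subC.simps[of ks a] subC.simps[of ks b])

lemma subD_sub: "set (atD s) \<subseteq> set (concat (map atD ds)) \<Longrightarrow> subD ds s"
  using sub_mono(1)[of "[s]" s] subD_refl[of s] by auto
lemma subC_sub: "set (atC s) \<subseteq> set (concat (map atC ks)) \<Longrightarrow> subC ks s"
  using sub_mono(2)[of "[s]" s] subC_refl[of s] by auto

lemma leR_props: "leR s t \<Longrightarrow> isR s \<and> isR t \<and> (trivR s \<longrightarrow> trivR t)"
  by (induction rule: leR.induct) auto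

lemma atD_R: "isR r \<Longrightarrow> set (atD r) = (if trivR r then {} else {Om})"
  by (induction r) auto

lemma subD_Om: "subD ds Om" by (simp add: subD.simps[of ds Om])
lemma subC_Om: "subC ks Om" by (simp add: subC.simps[of ks Om])

lemma soundness: "(leD s t \<longrightarrow> subD [s] t) \<and> (leC s2 t2 \<longrightarrow> subC [s2] t2)"
proof (induction rule: leD_leC.induct)
  case (D_refl s) then show ?case by (simp add: subD_refl)
next
  case (D_trans s t u) then show ?case using subD_trans by blast
next
  case (D_andL s t) then show ?case by (intro subD_sub) auto
next
  case (D_andR s t) then show ?case by (intro subD_sub) auto
next
  case (D_top s) then show ?case by (simp add: subD_Om)
next
  case (D_glb r s t) then show ?case by (simp add: subD_And)
next
  case (D_R s t)
  then have h: "isR s" "isR t" "trivR s \<longrightarrow> trivR t" using leR_props by auto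
  show ?case unfolding subD.simps[of "[s]" t]
    using h atD_R[of s] atD_R[of t] subC_refl[of Om] by auto
next
  case D_om_arr then show ?case by (simp add: subD.simps[of _ "Arr Om Om"])
next
  case (D_psi1 a) then show ?case by (simp add: subD.simps[of _ "Arr Om (Psi a)"] subC_refl)
next
  case (D_psi2 a) then show ?case by (simp add: subD.simps[of _ "Psi a"] subC_refl)
next
  case (D_arr_and k r1 r2) then show ?case by (simp add: subD.simps[of _ "Arr k (And r1 r2)"] subC_refl)
next
  case (D_arr k2 k1 r1 r2)
  then have "trivR r1 \<longrightarrow> trivR r2" using leR_props by auto
  then show ?case using D_arr by (auto simp: subD.simps[of _ "Arr k2 r2"])
next
  case (C_refl s) then show ?case by (simp add: subC_refl)
next
  case (C_trans s t u) then show ?case using subC_trans by blast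
next
  case (C_andL s t) then show ?case by (intro subC_sub) auto
next
  case (C_andR s t) then show ?case by (intro subC_sub) auto
next
  case (C_top s) then show ?case by (simp add: subC_Om)
next
  case (C_glb r s t) then show ?case by (simp add: subC_And)
next
  case C_om_prod then show ?case by (simp add: subC.simps[of _ "Prod Om Om"] subD_Om subC_Om)
next
  case (C_prod_and d1 d2 k1 k2)
  have "subD [d1, d2] (And d1 d2)" by (simp add: subD_And subD_sub)
  moreover have "subC [k1, k2] (And k1 k2)" by (simp add: subC_And subC_sub)
  ultimately show ?case by (simp add: subC.simps[of _ "Prod (And d1 d2) (And k1 k2)"])
next
  case (C_prod d1 d2 k1 k2)
  then show ?case by (simp add: subC.simps[of _ "Prod d2 k2"])
qed


fun Ds :: "ty list \<Rightarrow> ty" where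
  "Ds [] = Om" | "Ds [x] = x" | "Ds (x # y # xs) = And x (Ds (y # xs))"

definition Cs :: "ty list \<Rightarrow> ty" where "Cs ks = foldr And ks Om"

lemma isRD_Ds: "xs \<noteq> [] \<Longrightarrow> \<forall>x\<in>set xs. isRD x \<Longrightarrow> isRD (Ds xs)"
  by (induction xs rule: Ds.induct) auto

lemma leRD_Ds: "\<forall>x\<in>set xs. isRD x \<Longrightarrow> x \<in> set xs \<Longrightarrow> leRD (Ds xs) x"
proof (induction xs rule: Ds.induct)
  case 1 then show ?case by simp
next
  case (2 y) then show ?case by (auto intro: RD_refl)
next
  case (3 a b xs)
  have r: "isRD (Ds (b # xs))" using 3 by (intro isRD_Ds) auto
  show ?case
  proof (cases "x = a")
    case True then show ?thesis using 3 r by (auto intro: RD_andL)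
  next
    case False
    then have "leRD (Ds (b # xs)) x" using 3 by auto
    then show ?thesis using 3 r by (auto intro: RD_trans[OF RD_andR])
  qed
qed

lemma isRC_Cs: "\<forall>x\<in>set ks. isRC x \<Longrightarrow> isRC (Cs ks)"
  by (induction ks) (auto simp: Cs_def)

lemma leRC_Cs: "\<forall>x\<in>set ks. isRC x \<Longrightarrow> x \<in> set ks \<Longrightarrow> leRC (Cs ks) x"
proof (induction ks)
  case Nil then show ?case by simp
next
  case (Cons a ks)
  have r: "isRC (Cs ks)" using Cons by (intro isRC_Cs) auto
  show ?case
  proof (cases "x = a")
    case True then show ?thesis using Cons r by (auto simp: Cs_def intro: RC_andL)
  next
    case False
    then have "leRC (Cs ks) x" using Cons by auto
    then show ?thesis using Cons r by (auto simp: Cs_def intro: RC_trans[OF RC_andR])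
  qed
qed

lemma Cs_glb: "\<forall>x\<in>set ks. isRC x \<Longrightarrow> \<forall>y\<in>set L. leRC (Cs ks) y \<Longrightarrow> leRC (Cs ks) (Cs L)"
proof (induction L)
  case Nil then show ?case using RC_top[OF isRC_Cs[OF Nil(1)]] by (simp add: Cs_def)
next
  case (Cons a L) then show ?case by (simp add: Cs_def RC_glb)
qed

lemma atD_RD: "isRD d \<Longrightarrow> k \<in> set (atD d) \<Longrightarrow> isRC k \<and> leRD d (Arr k psi)"
proof (induction d)
  case (And a b)
  then show ?case by (auto intro: RD_trans[OF RD_andL] RD_trans[OF RD_andR])
next
  case (Arr k r) then show ?case by (auto intro: RD_refl)
qed auto

lemma atD_RD_ne: "isRD d \<Longrightarrow> atD d \<noteq> []"
  by (induction d) auto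

lemma atC_RC: "isRC x \<Longrightarrow> p \<in> set (atC x) \<Longrightarrow> isRD (fst p) \<and> isRC (snd p) \<and> leRC x (Prod (fst p) (snd p))"
proof (induction x)
  case (And a b)
  then show ?case by (auto intro: RC_trans[OF RC_andL] RC_trans[OF RC_andR])
next
  case (Prod d k) then show ?case by (auto intro: RC_refl)
qed auto

lemma D_from_atoms: "isRD t \<Longrightarrow> (\<forall>k\<in>set (atD t). leRD x (Arr k psi)) \<Longrightarrow> leRD x t"
proof (induction t)
  case (And a b) then show ?case by (auto intro: RD_glb)
next
  case (Arr k r) then show ?case by auto
qed auto

lemma C_from_atoms: "isRC t \<Longrightarrow> isRC x \<Longrightarrow> (\<forall>p\<in>set (atC t). leRC x (Prod (fst p) (snd p))) \<Longrightarrow> leRC x t"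
proof (induction t)
  case Om then show ?case by (auto intro: RC_top)
next
  case (And a b) then show ?case by (auto intro: RC_glb)
next
  case (Prod d k) then show ?case by auto
qed auto

lemma prod_collect: "P \<noteq> [] \<Longrightarrow> \<forall>p\<in>set P. isRD (fst p) \<and> isRC (snd p) \<Longrightarrow>
  leRC (Cs (map (\<lambda>p. Prod (fst p) (snd p)) P)) (Prod (Ds (map fst P)) (Cs (map snd P)))"
proof (induction P)
  case Nil then show ?case by simp
next
  case (Cons p P)
  obtain a b where p: "p = (a, b)" by (cases p)
  have ab: "isRD a" "isRC b" using Cons p by auto
  show ?case
  proof (cases "P = []")
    case True
    have "leRC (And (Prod a b) Om) (Prod a (And b Om))"
      by (rule RC_trans[OF RC_andL RC_prod]) (auto intro!: RD_refl RC_glb RC_refl RC_top ab)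
    then show ?thesis using True p by (simp add: Cs_def)
  next
    case False
    then obtain q P' where P: "P = q # P'" by (cases P) auto
    have ih: "leRC (Cs (map (\<lambda>p. Prod (fst p) (snd p)) P)) (Prod (Ds (map fst P)) (Cs (map snd P)))"
      using Cons False by auto
    have rD: "isRD (Ds (map fst P))" using Cons False by (intro isRD_Ds) auto
    have rC: "isRC (Cs (map snd P))" using Cons by (intro isRC_Cs) auto
    have rC2: "isRC (Cs (map (\<lambda>p. Prod (fst p) (snd p)) P))" using Cons by (intro isRC_Cs) auto
    have s1: "leRC (And (Prod a b) (Cs (map (\<lambda>p. Prod (fst p) (snd p)) P)))
               (And (Prod a b) (Prod (Ds (map fst P)) (Cs (map snd P))))"
      using ab rC2 by (auto intro!: RC_glb RC_andL RC_trans[OF RC_andR ih])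
    have s2: "leRC (And (Prod a b) (Prod (Ds (map fst P)) (Cs (map snd P)))) (Prod (And a (Ds (map fst P))) (And b (Cs (map snd P))))"
      using ab rD rC by (rule_tac RC_prod_and) auto
    have "leRC (And (Prod a b) (Cs (map (\<lambda>p. Prod (fst p) (snd p)) P))) (Prod (And a (Ds (map fst P))) (And b (Cs (map snd P))))"
      using RC_trans[OF s1 s2] .
    then show ?thesis using p P by (simp add: Cs_def)
  qed
qed


lemma restricted_complete:
  shows "subD ds t \<longrightarrow> (\<forall>d\<in>set ds. isRD d) \<longrightarrow> isRD t \<longrightarrow> leRD (Ds ds) t \<and> ds \<noteq> []"
  and "subC ks t2 \<longrightarrow> (\<forall>k\<in>set ks. isRC k) \<longrightarrow> isRC t2 \<longrightarrow> leRC (Cs ks) t2"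
proof (induction ds t and ks t2 rule: subD_subC.induct)
  case (1 ds t)
  show ?case
  proof (intro impI)
    assume h: "subD ds t" and rds: "\<forall>d\<in>set ds. isRD d" and rt: "isRD t"
    have at: "\<forall>k'\<in>set (atD t). leRD (Ds ds) (Arr k' psi) \<and> ds \<noteq> []"
    proof
      fix k' assume k': "k' \<in> set (atD t)"
      then obtain k where k: "k \<in> set (concat (map atD ds))" and c: "subC [k'] k"
        using h unfolding subD.simps[of ds t] by blast
      then obtain d where d: "d \<in> set ds" "k \<in> set (atD d)" by auto
      have rk': "isRC k'" using atD_RD[OF rt k'] by simp
      have rk: "isRC k" and dk: "leRD d (Arr k psi)" using atD_RD[of d k] d rds by auto
      have "leRC (Cs [k']) k" using 1 k' k c rk rk' by auto
      moreover have "leRC k' (Cs [k'])" unfolding Cs_def using rk'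
        by (auto intro!: RC_glb RC_refl RC_top)
      ultimately have "leRC k' k" using RC_trans by blast
      then have "leRD (Arr k psi) (Arr k' psi)" by (rule RD_arr)
      moreover have "leRD (Ds ds) d" using leRD_Ds rds d by blast
      ultimately show "leRD (Ds ds) (Arr k' psi) \<and> ds \<noteq> []" using dk d RD_trans by fastforce
    qed
    have ne: "ds \<noteq> []" using at atD_RD_ne[OF rt] by (cases "atD t") auto
    show "leRD (Ds ds) t \<and> ds \<noteq> []" using D_from_atoms[OF rt] at ne by blast
  qed
next
  case (2 ks t)
  show ?case
  proof (intro impI)
    assume h: "subC ks t" and rks: "\<forall>k\<in>set ks. isRC k" and rt: "isRC t"
    define P where "P = concat (map atC ks)"
    have rP: "\<forall>p\<in>set P. isRD (fst p) \<and> isRC (snd p)" using rks atC_RC unfolding P_def by fastforce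
    have rCs: "isRC (Cs ks)" using rks isRC_Cs by blast
    have glb: "leRC (Cs ks) (Cs (map (\<lambda>p. Prod (fst p) (snd p)) P))"
    proof (rule Cs_glb[OF rks], rule ballI)
      fix y assume "y \<in> set (map (\<lambda>p. Prod (fst p) (snd p)) P)"
      then obtain q x where q: "x \<in> set ks" "q \<in> set (atC x)" "y = Prod (fst q) (snd q)"
        unfolding P_def by auto
      have "leRC x y" using atC_RC[of x q] q rks by auto
      moreover have "leRC (Cs ks) x" using leRC_Cs rks q by blast
      ultimately show "leRC (Cs ks) y" using RC_trans by blast
    qed
    have "\<forall>p\<in>set (atC t). leRC (Cs ks) (Prod (fst p) (snd p))"
    proof
      fix p assume p: "p \<in> set (atC t)"
      from h p have a: "subD (map fst P) (fst p)" and b: "subC (map snd P) (snd p)"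
        unfolding subC.simps[of ks t] P_def by auto
      have rp: "isRD (fst p)" "isRC (snd p)" using atC_RC[OF rt p] by auto
      have ia: "leRD (Ds (map fst P)) (fst p) \<and> map fst P \<noteq> []"
        using 2(1)[OF p] a rP rp unfolding P_def by auto
      have ib: "leRC (Cs (map snd P)) (snd p)"
        using 2(2)[OF p] b rP rp unfolding P_def by auto
      have "leRC (Prod (Ds (map fst P)) (Cs (map snd P))) (Prod (fst p) (snd p))"
        using ia ib by (auto intro: RC_prod)
      moreover have "leRC (Cs (map (\<lambda>p. Prod (fst p) (snd p)) P)) (Prod (Ds (map fst P)) (Cs (map snd P)))"
        using prod_collect rP ia by auto
      ultimately show "leRC (Cs ks) (Prod (fst p) (snd p))" using glb RC_trans by blast
    qed
    then show "leRC (Cs ks) t" using C_from_atoms[OF rt rCs] by blast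
  qed
qed

lemma isR_sub: "(isRD x \<longrightarrow> isD x) \<and> (isRC x \<longrightarrow> isC x)"
  by (induction x) auto

lemma restricted_sound: "(leRD s t \<longrightarrow> leD s t) \<and> (leRC s2 t2 \<longrightarrow> leC s2 t2)"
proof (induction rule: leRD_leRC.induct)
  case (RD_arr k2 k1)
  then show ?case using D_arr[of k2 k1 psi psi] R_refl[of psi] by simp
qed (auto intro: leD_leC.intros simp: isR_sub)

theorem theorem6p3:
  shows "(\<forall>s t. isRD s \<longrightarrow> isRD t \<longrightarrow> (leRD s t \<longleftrightarrow> leD s t)) \<and>
         (\<forall>s t. isRC s \<longrightarrow> isRC t \<longrightarrow> (leRC s t \<longleftrightarrow> leC s t))"
proof (intro conjI allI impI iffI)
  fix s t assume "isRD s" "isRD t" "leRD s t" then show "leD s t" using restricted_sound by blast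
next
  fix s t assume r: "isRD s" "isRD t" and "leD s t"
  then have "subD [s] t" using soundness by blast
  then show "leRD s t" using restricted_complete(1)[of "[s]" t] r by simp
next
  fix s t assume "isRC s" "isRC t" "leRC s t" then show "leC s t" using restricted_sound by blast
next
  fix s t assume r: "isRC s" "isRC t" and "leC s t"
  then have "subC [s] t" using soundness by blast
  then have "leRC (Cs [s]) t" using restricted_complete(2)[of "[s]" t] r by simp
  moreover have "leRC s (Cs [s])" unfolding Cs_def using r by (auto intro!: RC_glb RC_refl RC_top)
  ultimately show "leRC s t" using RC_trans by blast
qed

end
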